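(* Let $X$ be a geodesic $\delta$--hyperbolic space ($\delta\geqslant0$), $x_0\in X$, and let $u_1,u_2,v,w_1,w_2$ be isometries of $X$ with $g:=u_1vw_1=u_2vw_2$ such that the products $u_1v$, $u_2v$, $vw_1$, $vw_2$ are reduced at $x_0$. Assume $|vx_0-x_0|>26\delta$, $|u_1x_0-u_2x_0|\leqslant|vx_0-x_0|$ and $|u_1x_0-x_0|\leqslant|u_2x_0-x_0|$. Then the points $u_1x_0$, $u_2x_0$, $u_1vx_0$ and $u_2vx_0$ are at distance at most $6\delta$ from any geodesic segment $[x_0,gx_0]$.
   Context: Distance $|x-y|$; Gromov product $(p,q)_x:=\frac12(|p-x|+|q-x|-|p-q|)$; $X$ is $\delta$--hyperbolic if $(p,r)_x\geqslant\min\{(p,q)_x,(q,r)_x\}-\delta$ for all $p,q,r,x$. The product $uv$ of two isometries is reduced at $x_0$ if $(u^{-1}x_0,vx_0)_{x_0}\leqslant\delta$. *)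

theory Defs
  imports "HOL-Analysis.Analysis"
begin

definition gromov_product :: "'a::metric_space \<Rightarrow> 'a \<Rightarrow> 'a \<Rightarrow> real" where
  "gromov_product x p q = (dist p x + dist q x - dist p q) / 2"

definition hyperbolic :: "real \<Rightarrow> 'a::metric_space itself \<Rightarrow> bool" where
  "hyperbolic \<delta> _ \<longleftrightarrow> (\<forall>p q r x::'a.
     gromov_product x p r \<ge> min (gromov_product x p q) (gromov_product x q r) - \<delta>)"

definition geodesic_segment_between :: "'a::metric_space set \<Rightarrow> 'a \<Rightarrow> 'a \<Rightarrow> bool" where
  "geodesic_segment_between G x y \<longleftrightarrow> (\<exists>\<gamma>::real \<Rightarrow> 'a.
     \<gamma> 0 = x \<and> \<gamma> (dist x y) = y \<and>
     (\<forall>s\<in>{0..dist x y}. \<forall>t\<in>{0..dist x y}. dist (\<gamma> s) (\<gamma> t) = \<bar>s - t\<bar>) \<and>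
     G = \<gamma> ` {0..dist x y})"

definition geodesic_space :: "'a::metric_space itself \<Rightarrow> bool" where
  "geodesic_space _ \<longleftrightarrow> (\<forall>x y::'a. \<exists>G. geodesic_segment_between G x y)"

definition isometry :: "('a::metric_space \<Rightarrow> 'a) \<Rightarrow> bool" where
  "isometry f \<longleftrightarrow> surj f \<and> (\<forall>x y. dist (f x) (f y) = dist x y)"

definition reduced_at :: "real \<Rightarrow> 'a::metric_space \<Rightarrow> ('a \<Rightarrow> 'a) \<Rightarrow> ('a \<Rightarrow> 'a) \<Rightarrow> bool" where
  "reduced_at \<delta> x0 u v \<longleftrightarrow> gromov_product x0 (inv u x0) (v x0) \<le> \<delta>"

end

theory Submission
  imports Defs
begin

lemma hyp_inst:
  assumes "hyperbolic \<delta> TYPE('a::metric_space)"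
  shows "gromov_product (w::'a) p r \<ge> min (gromov_product w p q) (gromov_product w q r) - \<delta>"
  using assms unfolding hyperbolic_def by blast

lemma key:
  fixes a b x0 z :: "'a::metric_space"
  assumes H: "hyperbolic \<delta> TYPE('a)" and d: "\<delta> \<ge> 0"
    and r1: "gromov_product a x0 b \<le> \<delta>" and r2: "gromov_product b a z \<le> \<delta>"
    and L: "dist a b > 3 * \<delta>"
  shows "gromov_product a x0 z \<le> 2 * \<delta> \<and> gromov_product b x0 z \<le> 2 * \<delta>"
proof
  have h: "gromov_product a x0 b \<ge> min (gromov_product a x0 z) (gromov_product a z b) - \<delta>"
    using hyp_inst[OF H] .
  have e: "gromov_product a z b + gromov_product b a z = dist a b"
    unfolding gromov_product_def by (simp add: dist_commute field_simps)
  show "gromov_product a x0 z \<le> 2 * \<delta>"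
  proof (rule ccontr)
    assume "\<not> ?thesis"
    then show False using h e r1 r2 L d by (auto simp: min_def split: if_splits)
  qed
next
  have h: "gromov_product b a z \<ge> min (gromov_product b a x0) (gromov_product b x0 z) - \<delta>"
    using hyp_inst[OF H] .
  have e: "gromov_product b a x0 + gromov_product a x0 b = dist a b"
    unfolding gromov_product_def by (simp add: dist_commute field_simps)
  show "gromov_product b x0 z \<le> 2 * \<delta>"
  proof (rule ccontr)
    assume "\<not> ?thesis"
    then show False using h e r1 r2 L d by (auto simp: min_def split: if_splits)
  qed
qed

lemma infdist_geod:
  fixes p x y :: "'a::metric_space"
  assumes H: "hyperbolic \<delta> TYPE('a)" and G: "geodesic_segment_between G x y"
  shows "infdist p G \<le> gromov_product p x y + 2 * \<delta>"
proof -
  obtain \<gamma> where g0: "\<gamma> 0 = x" and g1: "\<gamma> (dist x y) = y"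
    and gi: "\<forall>s\<in>{0..dist x y}. \<forall>t\<in>{0..dist x y}. dist (\<gamma> s) (\<gamma> t) = \<bar>s - t\<bar>"
    and GG: "G = \<gamma> ` {0..dist x y}"
    using G unfolding geodesic_segment_between_def by blast
  define t where "t = gromov_product x p y"
  have t0: "t \<ge> 0" unfolding t_def gromov_product_def
    using dist_triangle[of p y x] by (simp add: dist_commute)
  have t1: "t \<le> dist x y" unfolding t_def gromov_product_def
    using dist_triangle[of x p y] by (simp add: dist_commute)
  define m where "m = \<gamma> t"
  have mG: "m \<in> G" unfolding GG m_def using t0 t1 by auto
  have dxm: "dist x m = t" using gi t0 t1 g0 unfolding m_def
    by (metis abs_of_nonneg atLeastAtMost_iff diff_zero dist_commute order_refl zero_le_dist)
  have dmy: "dist m y = dist x y - t" using gi t0 t1 g1 unfolding m_def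
    by (metis abs_minus_commute abs_of_nonneg atLeastAtMost_iff diff_ge_0_iff_ge order_refl zero_le_dist)
  have h: "gromov_product p x y \<ge> min (gromov_product p x m) (gromov_product p m y) - \<delta>"
    using hyp_inst[OF H] .
  have "dist p m \<le> gromov_product p x y + 2 * \<delta>"
  proof -
    have c: "dist m p = dist p m" "dist x p = dist p x" "dist y p = dist p y" "dist m x = dist x m" "dist y x = dist x y" "dist y m = dist m y"
      by (simp_all add: dist_commute)
    have "gromov_product p x m \<le> gromov_product p x y + \<delta> \<or> gromov_product p m y \<le> gromov_product p x y + \<delta>"
      using h by linarith
    then show ?thesis
      unfolding gromov_product_def using dxm dmy c unfolding t_def gromov_product_def
      by (elim disjE) (simp_all add: field_simps; linarith)+
  qed
  moreover have "infdist p G \<le> dist p m" using mG by (rule infdist_le)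
  ultimately show ?thesis by linarith
qed

lemma iso_inv:
  assumes "isometry u"
  shows "u (inv u x) = x"
  using assms unfolding isometry_def by (simp add: surj_f_inv_f)

lemma iso_dist:
  assumes "isometry u"
  shows "dist (u x) (u y) = dist x y"
  using assms unfolding isometry_def by blast

lemma red1:
  assumes "isometry u" "isometry v" "reduced_at \<delta> x0 u v"
  shows "gromov_product (u x0) x0 (u (v x0)) \<le> \<delta>"
proof -
  have "gromov_product x0 (inv u x0) (v x0) = gromov_product (u x0) (u (inv u x0)) (u (v x0))"
    unfolding gromov_product_def using iso_dist[OF assms(1)] by simp
  then show ?thesis using assms(3) iso_inv[OF assms(1)] unfolding reduced_at_def by simp
qed

lemma red2:
  assumes "isometry u" "isometry v" "isometry w" "reduced_at \<delta> x0 v w"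
  shows "gromov_product (u (v x0)) (u x0) (u (v (w x0))) \<le> \<delta>"
proof -
  have "gromov_product x0 (inv v x0) (w x0)
     = gromov_product (u (v x0)) (u (v (inv v x0))) (u (v (w x0)))"
    unfolding gromov_product_def using iso_dist[OF assms(1)] iso_dist[OF assms(2)] by simp
  then show ?thesis using assms(4) iso_inv[OF assms(2)] unfolding reduced_at_def by simp
qed

lemma path_bound:
  fixes x0 :: "'a::metric_space"
  assumes H: "hyperbolic \<delta> TYPE('a)" and d: "\<delta> \<ge> 0"
    and "isometry u" "isometry v" "isometry w"
    and "reduced_at \<delta> x0 u v" "reduced_at \<delta> x0 v w"
    and L: "dist (v x0) x0 > 26 * \<delta>"
    and G: "geodesic_segment_between G x0 (u (v (w x0)))"
  shows "infdist (u x0) G \<le> 6 * \<delta> \<and> infdist (u (v x0)) G \<le> 6 * \<delta>"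
proof -
  have r1: "gromov_product (u x0) x0 (u (v x0)) \<le> \<delta>" using red1 assms by blast
  have r2: "gromov_product (u (v x0)) (u x0) (u (v (w x0))) \<le> \<delta>" using red2 assms by blast
  have "dist (u x0) (u (v x0)) = dist (v x0) x0"
    using iso_dist[OF assms(3)] by (simp add: dist_commute)
  then have "dist (u x0) (u (v x0)) > 3 * \<delta>" using L d by linarith
  from key[OF H d r1 r2 this] have k:
    "gromov_product (u x0) x0 (u (v (w x0))) \<le> 2 * \<delta>"
    "gromov_product (u (v x0)) x0 (u (v (w x0))) \<le> 2 * \<delta>" by auto
  show ?thesis using infdist_geod[OF H G, of "u x0"] infdist_geod[OF H G, of "u (v x0)"] k d
    by linarith
qed

theorem lemma2p32:
  fixes \<delta> :: real and x0 :: "'a::metric_space"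
    and u1 u2 v w1 w2 g :: "'a \<Rightarrow> 'a"
  assumes "geodesic_space TYPE('a)" and "hyperbolic \<delta> TYPE('a)" and "\<delta> \<ge> 0"
    and "isometry u1" "isometry u2" "isometry v" "isometry w1" "isometry w2"
    and "g = u1 \<circ> v \<circ> w1" and "g = u2 \<circ> v \<circ> w2"
    and "reduced_at \<delta> x0 u1 v" "reduced_at \<delta> x0 u2 v"
    and "reduced_at \<delta> x0 v w1" "reduced_at \<delta> x0 v w2"
    and "dist (v x0) x0 > 26 * \<delta>"
    and "dist (u1 x0) (u2 x0) \<le> dist (v x0) x0"
    and "dist (u1 x0) x0 \<le> dist (u2 x0) x0"
  shows "\<forall>G. geodesic_segment_between G x0 (g x0) \<longrightarrow>
           infdist (u1 x0) G \<le> 6 * \<delta> \<and> infdist (u2 x0) G \<le> 6 * \<delta> \<and>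
           infdist (u1 (v x0)) G \<le> 6 * \<delta> \<and> infdist (u2 (v x0)) G \<le> 6 * \<delta>"
proof (intro allI impI)
  fix G assume G: "geodesic_segment_between G x0 (g x0)"
  have G1: "geodesic_segment_between G x0 (u1 (v (w1 x0)))" using G assms(9) by simp
  have G2: "geodesic_segment_between G x0 (u2 (v (w2 x0)))" using G assms(10) by simp
  show "infdist (u1 x0) G \<le> 6 * \<delta> \<and> infdist (u2 x0) G \<le> 6 * \<delta> \<and>
           infdist (u1 (v x0)) G \<le> 6 * \<delta> \<and> infdist (u2 (v x0)) G \<le> 6 * \<delta>"
    using path_bound[OF assms(2,3,4,6,7,11,13,15) G1]
      path_bound[OF assms(2,3,5,6,8,12,14,15) G2] by blast
qed

end
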